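(* For any integers $x,y\ge 3$ and integers $a\le x/2$, $b\le y/2$, except for the case $x=y=4$, $a=b=2$, we have \[\binom{x}{a}\binom{y}{b}\le\binom{x+y-1}{a+b}.\] *)

theory Defs
  imports Main
begin

end

theory Submission
  imports Defs
begin

lemma choose_step: "(n::nat) choose k \<le> Suc n choose k"
  by (cases k) auto

lemma choose_mono_n: "(m::nat) \<le> n \<Longrightarrow> m choose k \<le> n choose k"
proof (induction n rule: dec_induct)
  case base then show ?case by simp
next
  case (step n) then show ?case using choose_step[of n k] by linarith
qed

lemma absorb: "Suc k * (n choose Suc k) = (n - k) * (n choose k)"
  using binomial_absorption[of k n] binomial_absorb_comp[of n k] by simp

lemma vdm: "((x::nat) + (y - 1)) choose r = (\<Sum>k\<le>r. (x choose k) * ((y - 1) choose (r - k)))"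
  using vandermonde[where r=r and m=x and n="y - 1"] by simp

lemma pascal_y: "1 \<le> y \<Longrightarrow> 1 \<le> (b::nat) \<Longrightarrow> y choose b = ((y - 1) choose b) + ((y - 1) choose (b - 1))"
proof -
  assume "1 \<le> y" "1 \<le> b"
  then obtain m c where "y = Suc m" "b = Suc c" by (metis Suc_le_D One_nat_def)
  then show ?thesis by simp
qed

lemma L1:
  fixes x y a b :: nat
  assumes "1 \<le> y" "2 * a + 1 \<le> x"
  shows "(x choose a) * (y choose b) \<le> (x + y - 1) choose (a + b)"
proof (cases "b = 0")
  case True
  then show ?thesis using choose_mono_n[of x "x + y - 1" a] assms by simp
next
  case False
  have mono: "x choose a \<le> x choose (a + 1)"
  proof -
    have "Suc a * (x choose Suc a) = (x - a) * (x choose a)" by (rule absorb)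
    moreover have "x - a \<ge> Suc a" using assms by simp
    then have "Suc a * (x choose a) \<le> (x - a) * (x choose a)" by (rule mult_le_mono1)
    ultimately have "Suc a * (x choose Suc a) \<ge> Suc a * (x choose a)"
      by simp
    then have "x choose a \<le> x choose Suc a" by (subst (asm) Suc_mult_le_cancel1)
    then show ?thesis by simp
  qed
  have sub: "{a, a + 1} \<subseteq> {..a + b}" using False by auto
  have "(\<Sum>k\<in>{a, a+1}. (x choose k) * ((y - 1) choose (a + b - k)))
        \<le> (\<Sum>k\<le>a+b. (x choose k) * ((y - 1) choose (a + b - k)))"
    by (rule sum_mono2[OF _ sub]) auto
  also have "\<dots> = (x + y - 1) choose (a + b)" using vdm[of x y "a+b"] assms by simp
  finally have S0: "(\<Sum>k\<in>{a, a+1}. (x choose k) * ((y - 1) choose (a + b - k)))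
     \<le> (x + y - 1) choose (a + b)" .
  have "(\<Sum>k\<in>{a, a+1}. (x choose k) * ((y - 1) choose (a + b - k)))
     = (x choose a) * ((y - 1) choose (a + b - a)) + (x choose (a+1)) * ((y - 1) choose (a + b - (a+1)))"
    by simp
  moreover have "a + b - a = b" "a + b - (a + 1) = b - 1" by auto
  ultimately have S: "(x choose a) * ((y - 1) choose b) + (x choose (a+1)) * ((y - 1) choose (b - 1))
     \<le> (x + y - 1) choose (a + b)" using S0 by simp
  have py: "y choose b = ((y - 1) choose b) + ((y - 1) choose (b - 1))"
    using pascal_y[of y b] assms False by simp
  have "(x choose a) * (y choose b) = (x choose a) * ((y - 1) choose b) + (x choose a) * ((y - 1) choose (b - 1))"
    unfolding py by (rule distrib_left)
  also have "\<dots> \<le> (x choose a) * ((y - 1) choose b) + (x choose (a+1)) * ((y - 1) choose (b - 1))"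
    using mono by (intro add_left_mono mult_le_mono1)
  finally show ?thesis using S by linarith
qed

lemma L2:
  fixes a b :: nat
  assumes "2 \<le> a" "2 \<le> b" "\<not> (a = 2 \<and> b = 2)"
  shows "((2*a) choose a) * ((2*b) choose b) \<le> (2*a + 2*b - 1) choose (a + b)"
proof -
  define x where "x = 2 * a"
  define y where "y = 2 * b"
  define P where "P = x choose (a+1)"
  define P' where "P' = x choose (a-1)"
  define Q where "Q = x choose a"
  define R where "R = (y - 1) choose (b - 1)"
  define R' where "R' = (y - 1) choose b"
  define S where "S = (y - 1) choose (b + 1)"
  have PP: "P' = P" unfolding P'_def P_def x_def
    using binomial_symmetric[of "a - 1" "2*a"] assms by (simp add: numeral_2_eq_2)
  have hP: "(a + 1) * P = a * Q" unfolding P_def Q_def x_def using absorb[of a "2*a"] by simp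
  have RR: "R' = R" unfolding R'_def R_def y_def
    using binomial_symmetric[of "b" "2*b - 1"] assms by (simp add: numeral_2_eq_2)
  have hS: "(b + 1) * S = (b - 1) * R'" unfolding S_def R'_def y_def using absorb[of b "2*b - 1"] by simp
  have sub: "{a - 1, a, a + 1} \<subseteq> {..a + b}" using assms by auto
  have "(\<Sum>k\<in>{a - 1, a, a+1}. (x choose k) * ((y - 1) choose (a + b - k)))
        \<le> (\<Sum>k\<le>a+b. (x choose k) * ((y - 1) choose (a + b - k)))"
    by (rule sum_mono2[OF _ sub]) auto
  also have "\<dots> = (x + y - 1) choose (a + b)" using vdm[of x y "a+b"] assms y_def by simp
  finally have Sm0: "(\<Sum>k\<in>{a - 1, a, a+1}. (x choose k) * ((y - 1) choose (a + b - k)))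
     \<le> (x + y - 1) choose (a + b)" .
  have d1: "a - 1 \<noteq> a" "a - 1 \<noteq> a + 1" "a \<noteq> a + 1" using assms by auto
  have "(\<Sum>k\<in>{a - 1, a, a+1}. (x choose k) * ((y - 1) choose (a + b - k)))
     = (x choose (a - 1)) * ((y - 1) choose (a + b - (a - 1)))
       + ((x choose a) * ((y - 1) choose (a + b - a))
       + (x choose (a + 1)) * ((y - 1) choose (a + b - (a + 1))))"
    using d1 by simp
  moreover have "a + b - (a - 1) = b + 1" "a + b - a = b" "a + b - (a + 1) = b - 1" using assms by auto
  ultimately have Sm: "P' * S + Q * R' + P * R \<le> (x + y - 1) choose (a + b)"
    using Sm0 unfolding P'_def S_def Q_def R'_def P_def R_def by (simp add: add.assoc)
  have pas: "y choose b = R' + R" unfolding R'_def R_def using pascal_y[of y b] assms y_def by simp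
  have key: "Q * R \<le> P * R + P * S"
  proof -
    obtain a' b' where A: "a = Suc a'" and B: "b = Suc b'" using assms
      by (intro that[of "a - 1" "b - 1"]) auto
    have "a' * b' \<ge> 2"
    proof (cases "a' = 1")
      case True then have "b' \<ge> 2" using assms A B by auto
      then show ?thesis using True by simp
    next
      case False then have "a' \<ge> 2" using assms A by auto
      moreover have "b' \<ge> 1" using assms B by auto
      ultimately show ?thesis using mult_le_mono[of 2 a' 1 b'] by simp
    qed
    then have ab: "(a + 1) * (b + 1) \<le> a * (2 * b)"
      unfolding A B by (simp add: algebra_simps)
    have "(a+1)*(b+1)*(P*R + P*S) = ((a+1)*P)*((b+1)*R) + ((a+1)*P)*((b+1)*S)"
      by (simp add: algebra_simps)
    also have "\<dots> = (a*Q)*((b+1)*R) + (a*Q)*((b-1)*R)" by (simp only: hP hS RR)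
    also have "\<dots> = (a*Q)*(((b+1) + (b-1))*R)" by (simp add: algebra_simps)
    also have "\<dots> = a * (2 * b) * (Q * R)" unfolding B by (simp add: algebra_simps)
    finally have eq: "(a+1)*(b+1)*(P*R + P*S) = a * (2 * b) * (Q * R)" .
    have "(a + 1) * (b + 1) * (Q * R) \<le> a * (2 * b) * (Q * R)"
      using ab by (rule mult_le_mono1)
    then have "(a + 1) * (b + 1) * (Q * R) \<le> (a+1)*(b+1)*(P*R + P*S)" using eq by simp
    then show ?thesis using mult_le_cancel1[of "(a+1)*(b+1)" "Q*R" "P*R+P*S"] by simp
  qed
  have "Q * (y choose b) = Q * R' + Q * R" using pas by (simp add: distrib_left)
  also have "\<dots> \<le> P' * S + Q * R' + P * R" using key PP by simp
  finally have fin: "Q * (y choose b) \<le> (x + y - 1) choose (a + b)" using Sm by (rule order_trans)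
  from fin show ?thesis by (simp only: Q_def x_def y_def)
qed

theorem claim1:
  fixes x y a b :: nat
  assumes "x \<ge> 3" and "y \<ge> 3"
    and "2 * a \<le> x" and "2 * b \<le> y"
    and "\<not> (x = 4 \<and> y = 4 \<and> a = 2 \<and> b = 2)"
  shows "(x choose a) * (y choose b) \<le> (x + y - 1) choose (a + b)"
proof (cases "2 * a + 1 \<le> x")
  case True then show ?thesis using L1 assms by simp
next
  case F1: False
  show ?thesis
  proof (cases "2 * b + 1 \<le> y")
    case True
    then have "(y choose b) * (x choose a) \<le> (y + x - 1) choose (b + a)" using L1 assms by simp
    then show ?thesis by (simp add: add.commute mult.commute)
  next
    case False
    then have X: "x = 2 * a" and Y: "y = 2 * b" and "a \<ge> 2" "b \<ge> 2" using F1 assms by auto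
    moreover have "\<not> (a = 2 \<and> b = 2)" using assms(5) X Y by auto
    ultimately have "((2*a) choose a) * ((2*b) choose b) \<le> (2*a + 2*b - 1) choose (a + b)"
      using L2[of a b] by blast
    then show ?thesis by (simp only: X Y)
  qed
qed

end
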